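(* With the notation of the context, writing $\mathbf 1=\mathbf 1_{\{|k_1+k_3|<|k_2|\}}$, $$\|\mathbf 1\,\mathrm T^{{\rm b},m}\|^2_{kk_1k_2k_3}\lesssim N_1N_3,\qquad \|\mathbf 1\,\mathrm T^{{\rm b},m}\|^2_{kk_2\to k_1k_3}\lesssim(N_1\wedge N_3)^{1-\frac\alpha2},$$ $$\|\mathbf 1\,\mathrm T^{{\rm b},m}\|^2_{k_1\to kk_2k_3}\lesssim N_3,\qquad \|\mathbf 1\,\mathrm T^{{\rm b},m}\|^2_{k_3\to kk_1k_2}\lesssim N_1.$$
   Context: Fix $\alpha\in(1,2)$, dyadic numbers $1\le N_1,N_2,N_3\le N$, a real number $m$ and a constant $C_0>0$. Let $S$ be the set of $(k,k_1,k_2,k_3)\in\mathbb Z^4$ with $k=k_1-k_2+k_3$, $k_2\notin\{k_1,k_3\}$, $\big||k_1|^\alpha-|k_2|^\alpha+|k_3|^\alpha-|k|^\alpha-m\big|\le C_0$, $|k|\le N$ and $|k_j|\le N_j$ for $j=1,2,3$. The base tensor is $\mathrm T^{{\rm b},m}_{kk_1k_2k_3}=\mathbf 1_S(k,k_1,k_2,k_3)$. For a tensor $H=H_{k_A}$ indexed by $k_A=(k_j)_{j\in A}\in\mathbb Z^A$ and a partition $(B,C)$ of $A$, $\|H\|_{k_B\to k_C}^2=\sup\{\sum_{k_C}|\sum_{k_B}H_{k_A}z_{k_B}|^2:\sum_{k_B}|z_{k_B}|^2=1\}$ (the $\ell^2_{k_B}\to\ell^2_{k_C}$ operator norm); $\|H\|_{k_A}$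 denotes the $\ell^2_{k_A}$ norm. $a\wedge b=\min(a,b)$. $A\lesssim B$ means $A\le CB$ with $C$ depending only on $\alpha$ and $C_0$. *)

theory Defs
  imports "HOL-Analysis.Analysis"
begin

definition dyadic :: "real \<Rightarrow> bool" where
  "dyadic x \<longleftrightarrow> (\<exists>n::nat. x = 2 ^ n)"

definition Sset :: "real \<Rightarrow> real \<Rightarrow> real \<Rightarrow> real \<Rightarrow> real \<Rightarrow> real \<Rightarrow> real \<Rightarrow> (int \<times> int \<times> int \<times> int) set" where
  "Sset \<alpha> C0 N N1 N2 N3 m = {(k, k1, k2, k3).
     k = k1 - k2 + k3 \<and> k2 \<noteq> k1 \<and> k2 \<noteq> k3 \<and>
     \<bar>real_of_int \<bar>k1\<bar> powr \<alpha> - real_of_int \<bar>k2\<bar> powr \<alpha> + real_of_int \<bar>k3\<bar> powr \<alpha>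
        - real_of_int \<bar>k\<bar> powr \<alpha> - m\<bar> \<le> C0 \<and>
     \<bar>real_of_int k\<bar> \<le> N \<and> \<bar>real_of_int k1\<bar> \<le> N1 \<and> \<bar>real_of_int k2\<bar> \<le> N2 \<and> \<bar>real_of_int k3\<bar> \<le> N3}"

definition Tb :: "real \<Rightarrow> real \<Rightarrow> real \<Rightarrow> real \<Rightarrow> real \<Rightarrow> real \<Rightarrow> real \<Rightarrow> int \<Rightarrow> int \<Rightarrow> int \<Rightarrow> int \<Rightarrow> real" where
  "Tb \<alpha> C0 N N1 N2 N3 m k k1 k2 k3 = indicator (Sset \<alpha> C0 N N1 N2 N3 m) (k, k1, k2, k3)"

definition Tcut :: "real \<Rightarrow> real \<Rightarrow> real \<Rightarrow> real \<Rightarrow> real \<Rightarrow> real \<Rightarrow> real \<Rightarrow> int \<Rightarrow> int \<Rightarrow> int \<Rightarrow> int \<Rightarrow> real" where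
  "Tcut \<alpha> C0 N N1 N2 N3 m k k1 k2 k3 =
     (if \<bar>k1 + k3\<bar> < \<bar>k2\<bar> then 1 else 0) * Tb \<alpha> C0 N N1 N2 N3 m k k1 k2 k3"

definition tnorm2 :: "('a \<Rightarrow> real) \<Rightarrow> real" where
  "tnorm2 H = (\<Sum>\<^sub>\<infinity>x. (H x)\<^sup>2)"

text \<open>Squared l^2_{k_B} -> l^2_{k_C} operator norm of a tensor reshaped as M k_B k_C
  (complex test vectors z of unit l^2 norm).\<close>
definition opnorm2 :: "('b \<Rightarrow> 'c \<Rightarrow> real) \<Rightarrow> real" where
  "opnorm2 M = Sup {(\<Sum>\<^sub>\<infinity>c. (cmod (\<Sum>\<^sub>\<infinity>b. complex_of_real (M b c) * z b))\<^sup>2) | z :: 'b \<Rightarrow> complex.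
       (\<lambda>b. (cmod (z b))\<^sup>2) summable_on UNIV \<and> (\<Sum>\<^sub>\<infinity>b. (cmod (z b))\<^sup>2) = 1}"

end

theory Submission
  imports Defs
begin


lemma infsum_fin_supp:
  fixes f :: "'a \<Rightarrow> 'b::{comm_monoid_add, t2_space}"
  assumes "finite S" "\<And>x. x \<notin> S \<Longrightarrow> f x = 0"
  shows "infsum f UNIV = sum f S"
proof -
  have "infsum f UNIV = infsum f S"
    by (rule infsum_cong_neutral) (use assms in auto)
  then show ?thesis using assms by simp
qed

lemma summable_fin_supp:
  fixes f :: "'a \<Rightarrow> 'b::{comm_monoid_add, topological_space}"
  assumes "finite S" "\<And>x. x \<notin> S \<Longrightarrow> f x = 0"
  shows "f summable_on UNIV"
proof -
  have "f summable_on S" using assms by simp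
  then show ?thesis
    using summable_on_cong_neutral[of S UNIV f f] assms by auto
qed

lemma schur:
  fixes M :: "'b \<Rightarrow> 'c \<Rightarrow> real" and R K :: real
  assumes fin: "finite {(b,c). M b c \<noteq> 0}"
    and range: "\<And>b c. M b c = 0 \<or> M b c = 1"
    and rows: "\<And>b. real (card {c. M b c \<noteq> 0}) \<le> R"
    and cols: "\<And>c. real (card {b. M b c \<noteq> 0}) \<le> K"
  shows "opnorm2 M \<le> R * K"
  unfolding opnorm2_def
proof (rule cSup_least)
  define z0 :: "'b \<Rightarrow> complex" where "z0 = (\<lambda>b. if b = undefined then 1 else 0)"
  have s0: "(\<lambda>b. (cmod (z0 b))\<^sup>2) summable_on UNIV"
    by (rule summable_fin_supp[of "{undefined}"]) (auto simp: z0_def)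
  have "(\<Sum>\<^sub>\<infinity>b. (cmod (z0 b))\<^sup>2) = (\<Sum>b\<in>{undefined}. (cmod (z0 b))\<^sup>2)"
    by (rule infsum_fin_supp) (auto simp: z0_def)
  then have "(\<Sum>\<^sub>\<infinity>b. (cmod (z0 b))\<^sup>2) = 1" by (simp add: z0_def)
  with s0 show "{(\<Sum>\<^sub>\<infinity>c. (cmod (\<Sum>\<^sub>\<infinity>b. complex_of_real (M b c) * z b))\<^sup>2) | z :: 'b \<Rightarrow> complex.
       (\<lambda>b. (cmod (z b))\<^sup>2) summable_on UNIV \<and> (\<Sum>\<^sub>\<infinity>b. (cmod (z b))\<^sup>2) = 1} \<noteq> {}"
    by blast
next
  fix x assume "x \<in> {(\<Sum>\<^sub>\<infinity>c. (cmod (\<Sum>\<^sub>\<infinity>b. complex_of_real (M b c) * z b))\<^sup>2) | z :: 'b \<Rightarrow> complex.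
       (\<lambda>b. (cmod (z b))\<^sup>2) summable_on UNIV \<and> (\<Sum>\<^sub>\<infinity>b. (cmod (z b))\<^sup>2) = 1}"
  then obtain z :: "'b \<Rightarrow> complex" where x: "x = (\<Sum>\<^sub>\<infinity>c. (cmod (\<Sum>\<^sub>\<infinity>b. complex_of_real (M b c) * z b))\<^sup>2)"
    and sz: "(\<lambda>b. (cmod (z b))\<^sup>2) summable_on UNIV" and nz: "(\<Sum>\<^sub>\<infinity>b. (cmod (z b))\<^sup>2) = 1"
    by blast
  define P where "P = {(b,c). M b c \<noteq> 0}"
  define Bs where "Bs = fst ` P"
  define Cs where "Cs = snd ` P"
  have fB: "finite Bs" "finite Cs" using fin by (auto simp: Bs_def Cs_def P_def)
  define w where "w = (\<lambda>b. cmod (z b))"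
  define col where "col = (\<lambda>c. {b\<in>Bs. M b c \<noteq> 0})"
  have colI: "col c = {b. M b c \<noteq> 0}" for c
    unfolding col_def Bs_def P_def by force
  have inner: "(\<Sum>\<^sub>\<infinity>b. complex_of_real (M b c) * z b) = (\<Sum>b\<in>Bs. complex_of_real (M b c) * z b)" for c
    by (rule infsum_fin_supp) (use fB in \<open>auto simp: Bs_def P_def\<close>, force)
  have outer: "x = (\<Sum>c\<in>Cs. (cmod (\<Sum>b\<in>Bs. complex_of_real (M b c) * z b))\<^sup>2)"
    unfolding x inner
  proof (rule infsum_fin_supp)
    show "finite Cs" by (rule fB)
    fix c assume "c \<notin> Cs"
    then have "\<forall>b. M b c = 0" unfolding Cs_def P_def by force
    then show "(cmod (\<Sum>b\<in>Bs. complex_of_real (M b c) * z b))\<^sup>2 = 0" by simp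
  qed
  have step1: "(cmod (\<Sum>b\<in>Bs. complex_of_real (M b c) * z b))\<^sup>2 \<le> K * (\<Sum>b\<in>col c. (w b)\<^sup>2)" for c
  proof -
    have "cmod (\<Sum>b\<in>Bs. complex_of_real (M b c) * z b) \<le> (\<Sum>b\<in>Bs. cmod (complex_of_real (M b c) * z b))"
      by (rule norm_sum)
    also have "\<dots> = (\<Sum>b\<in>col c. w b)"
    proof -
      have "(\<Sum>b\<in>Bs. cmod (complex_of_real (M b c) * z b)) = (\<Sum>b\<in>col c. cmod (complex_of_real (M b c) * z b))"
        unfolding col_def by (rule sum.mono_neutral_right) (use fB in auto)
      also have "\<dots> = (\<Sum>b\<in>col c. w b)"
        apply (rule sum.cong[OF refl])
        using range unfolding col_def w_def by (force simp: norm_mult)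
      finally show ?thesis .
    qed
    finally have a: "cmod (\<Sum>b\<in>Bs. complex_of_real (M b c) * z b) \<le> (\<Sum>b\<in>col c. w b)" .
    have "(cmod (\<Sum>b\<in>Bs. complex_of_real (M b c) * z b))\<^sup>2 \<le> (\<Sum>b\<in>col c. w b)\<^sup>2"
      using a by (simp add: power_mono)
    also have "\<dots> \<le> (\<Sum>b\<in>col c. (w b)\<^sup>2) * card (col c)"
      by (rule sum_squared_le_sum_of_squares)
    also have "\<dots> \<le> (\<Sum>b\<in>col c. (w b)\<^sup>2) * K"
      by (rule mult_left_mono) (use cols colI in \<open>auto intro: sum_nonneg\<close>)
    finally show ?thesis by (simp add: mult.commute)
  qed
  have "x \<le> (\<Sum>c\<in>Cs. K * (\<Sum>b\<in>col c. (w b)\<^sup>2))"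
    unfolding outer by (rule sum_mono) (rule step1)
  also have "\<dots> = K * (\<Sum>c\<in>Cs. \<Sum>b\<in>Bs. (if M b c \<noteq> 0 then (w b)\<^sup>2 else 0))"
    by (simp add: sum_distrib_left col_def sum.inter_filter[OF fB(1)])
  also have "\<dots> = K * (\<Sum>b\<in>Bs. (w b)\<^sup>2 * card {c\<in>Cs. M b c \<noteq> 0})"
    by (subst sum.swap) (simp add: sum.inter_filter[OF fB(2), symmetric] mult.commute)
  also have "\<dots> \<le> K * (\<Sum>b\<in>Bs. (w b)\<^sup>2 * R)"
  proof -
    have K0: "0 \<le> K" using cols[of undefined] by (meson of_nat_0_le_iff order_trans)
    have "card {c\<in>Cs. M b c \<noteq> 0} = card {c. M b c \<noteq> 0}" for b
      unfolding Cs_def P_def by (rule arg_cong[where f=card]) force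
    then show ?thesis using K0 rows
      by (intro mult_left_mono sum_mono) (auto intro!: mult_left_mono)
  qed
  also have "\<dots> = K * R * (\<Sum>b\<in>Bs. (w b)\<^sup>2)"
    by (simp add: sum_distrib_right sum_distrib_left mult_ac)
  also have "\<dots> \<le> K * R * 1"
  proof -
    have "(\<Sum>b\<in>Bs. (w b)\<^sup>2) \<le> (\<Sum>\<^sub>\<infinity>b. (cmod (z b))\<^sup>2)"
      unfolding w_def by (rule finite_sum_le_infsum) (use sz fB in auto)
    moreover have "0 \<le> K * R" using cols[of undefined] rows[of undefined]
      by (meson mult_nonneg_nonneg of_nat_0_le_iff order_trans)
    ultimately show ?thesis using nz by (intro mult_left_mono) auto
  qed
  finally show "x \<le> R * K" by (simp add: mult.commute)
qed



lemma d2_real: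
  fixes \<alpha> x :: real
  assumes a: "1 < \<alpha>" "\<alpha> < 2" and x: "2 \<le> x"
  shows "(x+1) powr \<alpha> - 2 * x powr \<alpha> + (x-1) powr \<alpha> \<ge> \<alpha>*(\<alpha>-1)*(x+1) powr (\<alpha>-2)"
proof -
  define \<psi> where "\<psi> = (\<lambda>y::real. (y+1) powr \<alpha> - y powr \<alpha>)"
  have d\<psi>: "DERIV \<psi> y :> \<alpha> * (y+1) powr (\<alpha>-1) - \<alpha> * y powr (\<alpha>-1)" if "x-1 \<le> y" for y
  proof -
    have y0: "y > 0" using that x by linarith
    have "DERIV (\<lambda>y. (y+1) powr \<alpha>) y :> \<alpha> * (y+1) powr (\<alpha>-1) * (1+0)"
      by (rule DERIV_chain2[where f="\<lambda>z. z powr \<alpha>" and g="\<lambda>y. y+1", OF has_real_derivative_powr])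
        (use y0 in \<open>auto intro!: derivative_eq_intros\<close>)
    moreover have "DERIV (\<lambda>y. y powr \<alpha>) y :> \<alpha> * y powr (\<alpha>-1)"
      using has_real_derivative_powr[of y \<alpha>] y0 by auto
    ultimately show ?thesis unfolding \<psi>_def by (auto intro: derivative_eq_intros)
  qed
  obtain \<zeta> where z: "x-1 < \<zeta>" "\<zeta> < x"
    and e1: "\<psi> x - \<psi> (x-1) = (x - (x-1)) * (\<alpha> * (\<zeta>+1) powr (\<alpha>-1) - \<alpha> * \<zeta> powr (\<alpha>-1))"
    using MVT2[of "x-1" x \<psi> "\<lambda>y. \<alpha> * (y+1) powr (\<alpha>-1) - \<alpha> * y powr (\<alpha>-1)"] d\<psi> by auto
  have z0: "\<zeta> > 0" using z x by linarith
  have dq: "DERIV (\<lambda>y. y powr (\<alpha>-1)) y :> (\<alpha>-1) * y powr (\<alpha>-1-1)" if "\<zeta> \<le> y" for y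
    using has_real_derivative_powr[of y "\<alpha>-1"] z0 that by auto
  obtain \<eta> where h: "\<zeta> < \<eta>" "\<eta> < \<zeta>+1"
    and e2: "(\<zeta>+1) powr (\<alpha>-1) - \<zeta> powr (\<alpha>-1) = (\<zeta>+1-\<zeta>) * ((\<alpha>-1) * \<eta> powr (\<alpha>-1-1))"
    using MVT2[of \<zeta> "\<zeta>+1" "\<lambda>y. y powr (\<alpha>-1)" "\<lambda>y. (\<alpha>-1) * y powr (\<alpha>-1-1)"] dq by auto
  have "\<eta> powr (\<alpha>-2) \<ge> (x+1) powr (\<alpha>-2)"
    by (rule powr_mono2') (use a h z z0 in auto)
  moreover have "\<psi> x - \<psi> (x-1) = \<alpha> * ((\<alpha>-1) * \<eta> powr (\<alpha>-2))"
  proof -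
    have q: "\<alpha>-1-1 = \<alpha>-2" by simp
    have "\<psi> x - \<psi> (x-1) = \<alpha> * ((\<zeta>+1) powr (\<alpha>-1) - \<zeta> powr (\<alpha>-1))"
      using e1 by (simp add: right_diff_distrib)
    also have "\<dots> = \<alpha> * ((\<alpha>-1) * \<eta> powr (\<alpha>-2))" using e2 unfolding q by simp
    finally show ?thesis .
  qed
  moreover have "\<psi> x - \<psi> (x-1) = (x+1) powr \<alpha> - 2 * x powr \<alpha> + (x-1) powr \<alpha>"
    unfolding \<psi>_def by simp
  moreover have "\<alpha>*(\<alpha>-1)*(x+1) powr (\<alpha>-2) \<le> \<alpha>*(\<alpha>-1)*\<eta> powr (\<alpha>-2)"
    by (rule mult_left_mono) (use a calculation in auto)
  ultimately show ?thesis by (simp add: mult.assoc)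
qed

definition cst :: "real \<Rightarrow> real" where
  "cst \<alpha> = min (\<alpha>*(\<alpha>-1)) (2 powr \<alpha> - 2)"

lemma cst_pos: "1 < \<alpha> \<Longrightarrow> \<alpha> < 2 \<Longrightarrow> 0 < cst \<alpha>"
  unfolding cst_def using powr_less_mono[of 1 \<alpha> 2] by auto

lemma d2_nonneg_int:
  fixes \<alpha> :: real and j :: int
  assumes a: "1 < \<alpha>" "\<alpha> < 2" and j: "0 \<le> j"
  shows "real_of_int \<bar>j+1\<bar> powr \<alpha> - 2 * real_of_int \<bar>j\<bar> powr \<alpha> + real_of_int \<bar>j-1\<bar> powr \<alpha>
        \<ge> cst \<alpha> * (real_of_int \<bar>j\<bar> + 1) powr (\<alpha>-2)"
proof -
  consider "j = 0" | "j = 1" | "j \<ge> 2" using j by linarith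
  then show ?thesis
  proof cases
    case 1
    have "\<alpha>*(\<alpha>-1) < 2*1" by (rule mult_strict_mono) (use a in auto)
    then have "cst \<alpha> \<le> 2" unfolding cst_def by simp
    then show ?thesis using 1 by simp
  next
    case 2
    have "cst \<alpha> \<le> 2 powr \<alpha> - 2" unfolding cst_def by simp
    moreover have "2 powr (\<alpha>-2) \<le> (1::real)"
      using powr_mono[of "\<alpha>-2" 0 2] a by auto
    moreover have "0 < cst \<alpha>" using cst_pos a by auto
    ultimately have "cst \<alpha> * 2 powr (\<alpha>-2) \<le> cst \<alpha> * 1" "cst \<alpha> \<le> 2 powr \<alpha> - 2"
      by (intro mult_left_mono, auto)
    then have "cst \<alpha> * 2 powr (\<alpha>-2) \<le> 2 powr \<alpha> - 2" by simp
    then show ?thesis using 2 by simp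
  next
    case 3
    have "real_of_int j \<ge> 2" using 3 by simp
    from d2_real[OF a this]
    have "(real_of_int j+1) powr \<alpha> - 2 * real_of_int j powr \<alpha> + (real_of_int j-1) powr \<alpha> \<ge> \<alpha>*(\<alpha>-1)*(real_of_int j+1) powr (\<alpha>-2)" .
    moreover have "cst \<alpha> * (real_of_int j+1) powr (\<alpha>-2) \<le> \<alpha>*(\<alpha>-1)*(real_of_int j+1) powr (\<alpha>-2)"
      by (rule mult_right_mono) (auto simp: cst_def)
    moreover have "real_of_int \<bar>j+1\<bar> = real_of_int j+1" "real_of_int \<bar>j-1\<bar> = real_of_int j-1"
      "real_of_int \<bar>j\<bar> = real_of_int j" using 3 by auto
    ultimately show ?thesis by (simp only:)
  qed
qed

lemma d2_int:
  fixes \<alpha> :: real and j :: int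
  assumes a: "1 < \<alpha>" "\<alpha> < 2"
  shows "real_of_int \<bar>j+1\<bar> powr \<alpha> - 2 * real_of_int \<bar>j\<bar> powr \<alpha> + real_of_int \<bar>j-1\<bar> powr \<alpha>
        \<ge> cst \<alpha> * (real_of_int \<bar>j\<bar> + 1) powr (\<alpha>-2)"
proof (cases "0 \<le> j")
  case True then show ?thesis using d2_nonneg_int[OF a] by blast
next
  case False
  have "0 \<le> -j" using False by simp
  moreover have eq: "\<bar>-j+1\<bar> = \<bar>j-1\<bar>" "\<bar>-j-1\<bar> = \<bar>j+1\<bar>" "\<bar>-j\<bar> = \<bar>j\<bar>" by auto
  ultimately show ?thesis using d2_nonneg_int[OF a, of "-j"] unfolding eq by linarith
qed



lemma convex_nat_chord:
  fixes f :: "nat \<Rightarrow> real"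
  assumes cv: "\<And>t. 0 < t \<Longrightarrow> t < n \<Longrightarrow> f (t+1) - 2 * f t + f (t-1) \<ge> 0"
    and p: "p \<le> n"
  shows "real n * f p \<le> real (n-p) * f 0 + real p * f n"
proof (cases "p = 0 \<or> p = n")
  case True then show ?thesis by (auto simp: algebra_simps)
next
  case False
  then have p0: "0 < p" "p < n" using p by auto
  define D where "D = (\<lambda>t. f (Suc t) - f t)"
  have mono1: "D t \<le> D (Suc t)" if "Suc t < n" for t
    using cv[of "Suc t"] that unfolding D_def by simp
  have mono: "D t \<le> D t'" if "t \<le> t'" "t' < n" for t t'
    using that
  proof (induction t' rule: nat_induct)
    case 0 then show ?case by simp
  next
    case (Suc m)
    show ?case
    proof (cases "t = Suc m")
      case True then show ?thesis by simp
    next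
      case False
      then have "t \<le> m" using Suc.prems by simp
      then have "D t \<le> D m" using Suc by simp
      also have "D m \<le> D (Suc m)" using mono1 Suc.prems by simp
      finally show ?thesis .
    qed
  qed
  have s1: "f p - f 0 = (\<Sum>t<p. D t)"
    unfolding D_def by (simp add: sum_lessThan_telescope)
  have s2: "f n - f p = (\<Sum>t=p..<n. D t)"
    unfolding D_def using p by (simp add: sum_Suc_diff')
  have "(\<Sum>t<p. D t) \<le> (\<Sum>t<p. D p)"
    by (rule sum_mono) (use mono p0 in auto)
  then have a1: "f p - f 0 \<le> real p * D p" using s1 by simp
  have "(\<Sum>t=p..<n. D p) \<le> (\<Sum>t=p..<n. D t)"
    by (rule sum_mono) (use mono p0 in auto)
  then have a2: "real (n-p) * D p \<le> f n - f p" using s2 by simp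
  have "real (n-p) * (f p - f 0) \<le> real (n-p) * (real p * D p)"
    by (rule mult_left_mono[OF a1]) simp
  also have "\<dots> = real p * (real (n-p) * D p)" by simp
  also have "\<dots> \<le> real p * (f n - f p)"
    by (rule mult_left_mono[OF a2]) simp
  finally have "real (n-p) * (f p - f 0) \<le> real p * (f n - f p)" .
  moreover have "real (n-p) = real n - real p" using p by simp
  ultimately show ?thesis by (simp add: algebra_simps)
qed

lemma chord_int:
  fixes g :: "int \<Rightarrow> real"
  assumes cv: "\<And>t. i < t \<Longrightarrow> t < k \<Longrightarrow> g (t+1) - 2 * g t + g (t-1) \<ge> lam"
    and ij: "i \<le> j" and jk: "j \<le> k"
  shows "real_of_int (k-i) * g j \<le> real_of_int (k-j) * g i + real_of_int (j-i) * g k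
     - lam/2 * real_of_int (k-i) * real_of_int (j-i) * real_of_int (k-j)"
proof -
  define n where "n = nat (k-i)"
  define p where "p = nat (j-i)"
  define f where "f = (\<lambda>t::nat. g (i + int t) - lam/2 * (real t)\<^sup>2)"
  have cvf: "f (t+1) - 2 * f t + f (t-1) \<ge> 0" if "0 < t" "t < n" for t
  proof -
    have "g (i + int t + 1) - 2 * g (i + int t) + g (i + int t - 1) \<ge> lam"
      by (rule cv) (use that n_def in auto)
    moreover have "int (t-1) = int t - 1" using that by simp
    moreover have "real (t-1) = real t - 1" using that by simp
    ultimately show ?thesis unfolding f_def
      by (simp add: power2_eq_square algebra_simps)
  qed
  have pn: "p \<le> n" using jk unfolding p_def n_def by simp
  from convex_nat_chord[of n f p, OF cvf pn]
  have c: "real n * f p \<le> real (n-p) * f 0 + real p * f n" by simp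
  have e: "real n = real_of_int (k-i)" "real p = real_of_int (j-i)" "real (n-p) = real_of_int (k-j)"
    "i + int p = j" "i + int n = k"
    using ij jk unfolding n_def p_def by auto
  have "real_of_int (k-i) * g j - real_of_int (k-i) * lam/2 * (real_of_int (j-i))\<^sup>2
    \<le> real_of_int (k-j) * g i + real_of_int (j-i) * g k - real_of_int (j-i) * lam/2 * (real_of_int (k-i))\<^sup>2"
    using c unfolding f_def e by (simp add: algebra_simps)
  moreover have "real_of_int (j-i) * lam/2 * (real_of_int (k-i))\<^sup>2 - real_of_int (k-i) * lam/2 * (real_of_int (j-i))\<^sup>2
     = lam/2 * real_of_int (k-i) * real_of_int (j-i) * real_of_int (k-j)"
    unfolding of_int_diff power2_eq_square by (simp add: field_simps)
  ultimately show ?thesis by linarith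
qed

lemma count_convex:
  fixes g :: "int \<Rightarrow> real" and A :: "int set"
  assumes fin: "finite A" and lam: "0 < lam" and C0: "0 \<le> C0"
    and win: "\<And>j. j \<in> A \<Longrightarrow> \<bar>g j - a\<bar> \<le> C0"
    and cv: "\<And>t x y. x \<in> A \<Longrightarrow> y \<in> A \<Longrightarrow> x < t \<Longrightarrow> t < y \<Longrightarrow> g (t+1) - 2 * g t + g (t-1) \<ge> lam"
  shows "real (card A) \<le> 2 * sqrt (4*C0/lam) + 2"
proof (cases "A = {}")
  case True then show ?thesis using C0 lam by simp
next
  case False
  define i where "i = Min A"
  define k where "k = Max A"
  define T where "T = 4*C0/lam"
  have T0: "0 \<le> T" unfolding T_def using C0 lam by simp
  have iA: "i \<in> A" and kA: "k \<in> A" unfolding i_def k_def using fin False by auto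
  have bnd: "i \<le> j" "j \<le> k" if "j \<in> A" for j unfolding i_def k_def using fin that by auto
  have prod: "real_of_int (j-i) * real_of_int (k-j) \<le> T" if jA: "j \<in> A" for j
  proof -
    define n where "n = real_of_int (k-i)"
    define p where "p = real_of_int (j-i)"
    define q where "q = real_of_int (k-j)"
    have pq: "0 \<le> p" "0 \<le> q" "n = p + q" using bnd[OF jA] unfolding n_def p_def q_def by auto
    have ch: "n * g j \<le> q * g i + p * g k - lam/2 * n * p * q"
      unfolding n_def p_def q_def
      by (rule chord_int) (use cv iA kA bnd[OF jA] in auto)
    have "n * (a - C0) \<le> n * g j" using win[OF jA] pq by (intro mult_left_mono) auto
    moreover have "q * g i \<le> q * (a + C0)" using win[OF iA] pq by (intro mult_left_mono) auto
    moreover have "p * g k \<le> p * (a + C0)" using win[OF kA] pq by (intro mult_left_mono) auto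
    ultimately have "n * (a - C0) \<le> q * (a + C0) + p * (a + C0) - lam/2 * n * p * q"
      using ch by linarith
    then have "lam/2 * n * (p * q) \<le> n * (2 * C0)" using pq by (simp add: algebra_simps)
    then have main: "n * (lam/2 * (p * q)) \<le> n * (2 * C0)" by (simp add: mult_ac)
    show ?thesis
    proof (cases "n = 0")
      case True then have "p = 0" using pq by simp
      then show ?thesis using T0 unfolding p_def q_def by simp
    next
      case False
      then have "n > 0" using pq by simp
      then have "lam/2 * (p * q) \<le> 2 * C0" using main by simp
      then have "p * q \<le> T" unfolding T_def using lam by (simp add: field_simps)
      then show ?thesis unfolding p_def q_def .
    qed
  qed
  define r where "r = nat \<lfloor>sqrt T\<rfloor>"
  have r1: "real r \<le> sqrt T" unfolding r_def using T0 by simp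
  have r2: "sqrt T < real r + 1"
  proof -
    have "0 \<le> \<lfloor>sqrt T\<rfloor>" using T0 by simp
    then have "real (nat \<lfloor>sqrt T\<rfloor>) = real_of_int \<lfloor>sqrt T\<rfloor>" by simp
    moreover have "sqrt T < real_of_int \<lfloor>sqrt T\<rfloor> + 1" by linarith
    ultimately show ?thesis by (simp add: r_def)
  qed
  have sub: "A \<subseteq> {i..i + int r} \<union> {k - int r..k}"
  proof
    fix j assume jA: "j \<in> A"
    show "j \<in> {i..i + int r} \<union> {k - int r..k}"
    proof (rule ccontr)
      assume "j \<notin> {i..i + int r} \<union> {k - int r..k}"
      then have h: "j - i \<ge> int r + 1" "k - j \<ge> int r + 1" using bnd[OF jA] by auto
      then have h': "real_of_int (j-i) \<ge> real r + 1" "real_of_int (k-j) \<ge> real r + 1" by linarith+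
      have "(real r + 1) * (real r + 1) \<le> real_of_int (j-i) * real_of_int (k-j)"
        by (rule mult_mono) (use h' in auto)
      moreover have "sqrt T * sqrt T < (real r + 1) * (real r + 1)"
        by (rule mult_strict_mono) (use r2 T0 in auto)
      moreover have "sqrt T * sqrt T = T" using T0 by simp
      ultimately show False using prod[OF jA] by linarith
    qed
  qed
  have "card A \<le> card ({i..i + int r} \<union> {k - int r..k})"
    by (rule card_mono) (simp, rule sub)
  also have "\<dots> \<le> card {i..i + int r} + card {k - int r..k}" by (rule card_Un_le)
  also have "\<dots> = 2 * (r + 1)" by simp
  finally have "real (card A) \<le> real (2 * (r + 1))" by (simp only: of_nat_le_iff)
  then have "real (card A) \<le> 2 * (real r + 1)" by simp
  moreover have "2 * (real r + 1) \<le> 2 * sqrt T + 2" using r1 by simp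
  ultimately have "real (card A) \<le> 2 * sqrt T + 2" by (rule order_trans)
  then show ?thesis by (simp only: T_def)
qed



abbreviation pw :: "real \<Rightarrow> int \<Rightarrow> real" where
  "pw \<alpha> x \<equiv> real_of_int \<bar>x\<bar> powr \<alpha>"

lemma incr_sum:
  fixes \<phi> :: "int \<Rightarrow> real"
  assumes inc: "\<And>t. c < t \<Longrightarrow> \<phi> t + 1 \<le> \<phi> (t+1)" and ci: "c < i"
  shows "\<phi> i + real n \<le> \<phi> (i + int n)"
proof (induction n)
  case 0 then show ?case by simp
next
  case (Suc n)
  have st: "\<phi> (i + int n) + 1 \<le> \<phi> (i + int n + 1)" by (rule inc) (use ci in simp)
  have e: "i + int (Suc n) = i + int n + 1" by simp
  have r: "real (Suc n) = real n + 1" by simp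
  show ?case unfolding e r using st Suc by linarith
qed

lemma incr_diff:
  fixes \<phi> :: "int \<Rightarrow> real"
  assumes inc: "\<And>t. c < t \<Longrightarrow> \<phi> t + 1 \<le> \<phi> (t+1)" and ci: "c < i" and it: "i \<le> t"
  shows "\<phi> i + real_of_int (t - i) \<le> \<phi> t"
  using incr_sum[where c=c and \<phi>=\<phi> and i=i and n="nat (t-i)", OF inc ci] it by simp

lemma count_incr:
  fixes \<phi> :: "int \<Rightarrow> real"
  assumes inc: "\<And>t. c < t \<Longrightarrow> \<phi> t + 1 \<le> \<phi> (t+1)" and C0: "0 \<le> C0"
  shows "finite {t. c < t \<and> \<bar>\<phi> t - a\<bar> \<le> C0} \<and> real (card {t. c < t \<and> \<bar>\<phi> t - a\<bar> \<le> C0}) \<le> 4*C0 + 1"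
proof (cases "{t. c < t \<and> \<bar>\<phi> t - a\<bar> \<le> C0} = {}")
  case True show ?thesis unfolding True using C0 by simp
next
  case False
  then obtain i where i: "c < i" "\<bar>\<phi> i - a\<bar> \<le> C0" by blast
  define r where "r = nat \<lfloor>2*C0\<rfloor>"
  have sub: "{t. c < t \<and> \<bar>\<phi> t - a\<bar> \<le> C0} \<subseteq> {i - int r..i + int r}"
  proof
    fix t assume t: "t \<in> {t. c < t \<and> \<bar>\<phi> t - a\<bar> \<le> C0}"
    have "\<bar>t - i\<bar> \<le> int r"
    proof (cases "i \<le> t")
      case True
      have "\<phi> i + real_of_int (t - i) \<le> \<phi> t" by (rule incr_diff[where c=c and \<phi>=\<phi>, OF inc i(1) True])
      then have "real_of_int (t - i) \<le> 2*C0" using t i by auto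
      then have "t - i \<le> \<lfloor>2*C0\<rfloor>" by linarith
      then show ?thesis using True C0 unfolding r_def by simp
    next
      case False
      have "\<phi> t + real_of_int (i - t) \<le> \<phi> i" by (rule incr_diff[where c=c and \<phi>=\<phi>, OF inc]) (use t False in auto)
      then have "real_of_int (i - t) \<le> 2*C0" using t i by auto
      then have "i - t \<le> \<lfloor>2*C0\<rfloor>" by linarith
      then show ?thesis using False C0 unfolding r_def by simp
    qed
    then show "t \<in> {i - int r..i + int r}" by auto
  qed
  have fin: "finite {t. c < t \<and> \<bar>\<phi> t - a\<bar> \<le> C0}" by (rule finite_subset[OF sub]) simp
  have "card {t. c < t \<and> \<bar>\<phi> t - a\<bar> \<le> C0} \<le> card {i - int r..i + int r}"
    by (rule card_mono) (simp, rule sub)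
  also have "\<dots> = 2 * r + 1" by simp
  finally have "real (card {t. c < t \<and> \<bar>\<phi> t - a\<bar> \<le> C0}) \<le> real (2 * r + 1)" by (simp only: of_nat_le_iff)
  moreover have "real r \<le> 2 * C0" unfolding r_def using C0 by linarith
  ultimately show ?thesis using fin by simp
qed

lemma powr_step:
  fixes \<alpha> :: real and t :: int
  assumes a: "1 < \<alpha>" and t: "1 \<le> t"
  shows "pw \<alpha> t + 1 \<le> pw \<alpha> (t+1)"
proof -
  have t': "(1::real) \<le> real_of_int t" using t by simp
  have "(real_of_int t + 1) powr \<alpha> = (real_of_int t + 1) powr (1 + (\<alpha>-1))" by simp
  also have "\<dots> = (real_of_int t + 1) * (real_of_int t + 1) powr (\<alpha>-1)"
    by (subst powr_add) (use t' in simp)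
  also have "\<dots> \<ge> (real_of_int t + 1) * real_of_int t powr (\<alpha>-1)"
    by (rule mult_left_mono, rule powr_mono2) (use a t' in auto)
  finally have "(real_of_int t + 1) powr \<alpha> \<ge> real_of_int t * real_of_int t powr (\<alpha>-1) + real_of_int t powr (\<alpha>-1)"
    by (simp add: algebra_simps)
  moreover have "real_of_int t * real_of_int t powr (\<alpha>-1) = real_of_int t powr \<alpha>"
    using t' by (simp add: powr_mult_base)
  moreover have "1 \<le> real_of_int t powr (\<alpha>-1)" by (rule ge_one_powr_ge_zero) (use a t' in auto)
  moreover have "\<bar>t\<bar> = t" "\<bar>t+1\<bar> = t+1" using t by auto
  ultimately show ?thesis by simp
qed

lemma count_k2_pos:
  fixes \<alpha> C0 a :: real and s :: int
  assumes a: "1 < \<alpha>" and C0: "0 \<le> C0"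
  shows "finite {k2. \<bar>s\<bar> < k2 \<and> \<bar>pw \<alpha> (s - k2) + pw \<alpha> k2 - a\<bar> \<le> C0} \<and>
    real (card {k2. \<bar>s\<bar> < k2 \<and> \<bar>pw \<alpha> (s - k2) + pw \<alpha> k2 - a\<bar> \<le> C0}) \<le> 4*C0 + 1"
proof (rule count_incr[OF _ C0])
  fix t assume t: "\<bar>s\<bar> < t"
  have "pw \<alpha> t + 1 \<le> pw \<alpha> (t+1)" by (rule powr_step[OF a]) (use t in linarith)
  moreover have "pw \<alpha> (s - t) \<le> pw \<alpha> (s - (t+1))"
    by (rule powr_mono2) (use a t in auto)
  ultimately show "pw \<alpha> (s - t) + pw \<alpha> t + 1 \<le> pw \<alpha> (s - (t+1)) + pw \<alpha> (t+1)" by linarith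
qed

lemma count_k2:
  fixes \<alpha> C0 a :: real and s :: int
  assumes a: "1 < \<alpha>" and C0: "0 \<le> C0"
  shows "finite {k2. \<bar>s\<bar> < \<bar>k2\<bar> \<and> \<bar>pw \<alpha> (s - k2) + pw \<alpha> k2 - a\<bar> \<le> C0} \<and>
    real (card {k2. \<bar>s\<bar> < \<bar>k2\<bar> \<and> \<bar>pw \<alpha> (s - k2) + pw \<alpha> k2 - a\<bar> \<le> C0}) \<le> 8*C0 + 2"
proof -
  define P where "P = {k2. \<bar>s\<bar> < k2 \<and> \<bar>pw \<alpha> (s - k2) + pw \<alpha> k2 - a\<bar> \<le> C0}"
  define Q where "Q = {k2. \<bar>-s\<bar> < k2 \<and> \<bar>pw \<alpha> (-s - k2) + pw \<alpha> k2 - a\<bar> \<le> C0}"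
  have hP: "finite P" "real (card P) \<le> 4*C0+1" using count_k2_pos[OF a C0, of s a] unfolding P_def by auto
  have hQ: "finite Q" "real (card Q) \<le> 4*C0+1" using count_k2_pos[OF a C0, of "-s" a] unfolding Q_def by auto
  have eq: "{k2. \<bar>s\<bar> < \<bar>k2\<bar> \<and> \<bar>pw \<alpha> (s - k2) + pw \<alpha> k2 - a\<bar> \<le> C0} = P \<union> uminus ` Q"
  proof (rule set_eqI, rule iffI)
    fix x assume x: "x \<in> {k2. \<bar>s\<bar> < \<bar>k2\<bar> \<and> \<bar>pw \<alpha> (s - k2) + pw \<alpha> k2 - a\<bar> \<le> C0}"
    show "x \<in> P \<union> uminus ` Q"
    proof (cases "0 < x")
      case True then show ?thesis using x unfolding P_def by auto
    next
      case False
      have "\<bar>-s - (-x)\<bar> = \<bar>s - x\<bar>" by simp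
      then have "-x \<in> Q" using x False unfolding Q_def by auto
      then show ?thesis by (metis UnI2 image_eqI minus_minus)
    qed
  next
    fix x assume "x \<in> P \<union> uminus ` Q"
    then show "x \<in> {k2. \<bar>s\<bar> < \<bar>k2\<bar> \<and> \<bar>pw \<alpha> (s - k2) + pw \<alpha> k2 - a\<bar> \<le> C0}"
    proof
      assume "x \<in> P" then show ?thesis unfolding P_def by auto
    next
      assume "x \<in> uminus ` Q"
      then obtain y where y: "y \<in> Q" "x = -y" by auto
      have h: "\<bar>-s\<bar> < y \<and> \<bar>pw \<alpha> (-s - y) + pw \<alpha> y - a\<bar> \<le> C0"
        using y(1) unfolding Q_def by (rule CollectD)
      have e1: "\<bar>-s - y\<bar> = \<bar>s - (-y)\<bar>" "\<bar>y\<bar> = \<bar>-y\<bar>" by simp_all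
      have "\<bar>s\<bar> < \<bar>x\<bar> \<and> \<bar>pw \<alpha> (s - x) + pw \<alpha> x - a\<bar> \<le> C0"
        using h unfolding y(2) e1 by auto
      then show ?thesis by simp
    qed
  qed
  have "card (P \<union> uminus ` Q) \<le> card P + card (uminus ` Q)" by (rule card_Un_le)
  also have "card (uminus ` Q) = card Q" by (rule card_image) (simp add: inj_on_def)
  finally have "real (card (P \<union> uminus ` Q)) \<le> real (card P) + real (card Q)" by linarith
  then show ?thesis unfolding eq using hP hQ by simp
qed



lemma lin_help: "(l::real) \<le> a - 2*b + c \<Longrightarrow> 0 \<le> d - 2*e + f \<Longrightarrow> l \<le> a + f - 2*(b + e) + (c + d)"
  by argo

lemma lin_help2: "(x::real) \<le> 2 * y + 2 \<Longrightarrow> y \<le> s * (2 * p) \<Longrightarrow> 1 \<le> p \<Longrightarrow> 0 \<le> s \<Longrightarrow> x \<le> (4 * s + 2) * p"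
  by (simp add: algebra_simps)

lemma count_row:
  fixes \<alpha> C0 a R :: real and s :: int
  assumes a: "1 < \<alpha>" "\<alpha> < 2" and C0: "0 \<le> C0" and R: "1 \<le> R"
  shows "finite {j. \<bar>real_of_int j\<bar> \<le> R \<and> \<bar>pw \<alpha> j + pw \<alpha> (s-j) - a\<bar> \<le> C0} \<and>
    real (card {j. \<bar>real_of_int j\<bar> \<le> R \<and> \<bar>pw \<alpha> j + pw \<alpha> (s-j) - a\<bar> \<le> C0})
      \<le> (4 * sqrt (4*C0/cst \<alpha>) + 2) * R powr (1 - \<alpha>/2)"
proof -
  define A where "A = {j. \<bar>real_of_int j\<bar> \<le> R \<and> \<bar>pw \<alpha> j + pw \<alpha> (s-j) - a\<bar> \<le> C0}"
  define g where "g = (\<lambda>j. pw \<alpha> j + pw \<alpha> (s-j))"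
  define lam where "lam = cst \<alpha> * (R+1) powr (\<alpha>-2)"
  have cp: "0 < cst \<alpha>" by (rule cst_pos) (use a in auto)
  have lam0: "0 < lam" unfolding lam_def using cp R by simp
  have finA: "finite A"
  proof (rule finite_subset)
    show "A \<subseteq> {-\<lfloor>R\<rfloor>..\<lfloor>R\<rfloor>}" unfolding A_def by (auto, linarith+)
  qed simp
  have win: "\<bar>g j - a\<bar> \<le> C0" if "j \<in> A" for j using that unfolding A_def g_def by simp
  have cv: "g (t+1) - 2 * g t + g (t-1) \<ge> lam" if "x \<in> A" "y \<in> A" "x < t" "t < y" for t x y
  proof -
    have "\<bar>real_of_int x\<bar> \<le> R" "\<bar>real_of_int y\<bar> \<le> R" using that unfolding A_def by auto
    then have tR: "real_of_int \<bar>t\<bar> + 1 \<le> R + 1" using that by linarith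
    have d1: "pw \<alpha> (t+1) - 2 * pw \<alpha> t + pw \<alpha> (t-1) \<ge> cst \<alpha> * (real_of_int \<bar>t\<bar> + 1) powr (\<alpha>-2)"
      by (rule d2_int[OF a])
    have pm: "(real_of_int \<bar>t\<bar> + 1) powr (\<alpha>-2) \<ge> (R+1) powr (\<alpha>-2)"
      by (rule powr_mono2') (use a tR in auto)
    then have d1': "pw \<alpha> (t+1) - 2 * pw \<alpha> t + pw \<alpha> (t-1) \<ge> lam"
    proof -
      have "cst \<alpha> * (R+1) powr (\<alpha>-2) \<le> cst \<alpha> * (real_of_int \<bar>t\<bar> + 1) powr (\<alpha>-2)"
        by (rule mult_left_mono) (use pm cp in auto)
      then show ?thesis unfolding lam_def using d1 by (rule order_trans)
    qed
    have "pw \<alpha> (s-t+1) - 2 * pw \<alpha> (s-t) + pw \<alpha> (s-t-1) \<ge> cst \<alpha> * (real_of_int \<bar>s-t\<bar> + 1) powr (\<alpha>-2)"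
      by (rule d2_int[OF a])
    moreover have "0 \<le> cst \<alpha> * (real_of_int \<bar>s-t\<bar> + 1) powr (\<alpha>-2)" using cp by simp
    ultimately have d2: "pw \<alpha> (s-t+1) - 2 * pw \<alpha> (s-t) + pw \<alpha> (s-t-1) \<ge> 0" by linarith
    have e: "s - (t+1) = s-t-1" "s - (t-1) = s-t+1" by simp_all
    show ?thesis unfolding g_def e by (rule lin_help[OF d1' d2])
  qed
  have c1: "real (card A) \<le> 2 * sqrt (4*C0/lam) + 2"
    by (rule count_convex[OF finA lam0 C0, of g a]) (use win cv in auto)
  define e where "e = 1 - \<alpha>/2"
  have e01: "0 < e" "e \<le> 1" unfolding e_def using a by auto
  have "4*C0/lam = (4*C0/cst \<alpha>) * (R+1) powr (2-\<alpha>)"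
  proof -
    have "(R+1) powr (2-\<alpha>) = inverse ((R+1) powr (\<alpha>-2))"
      using powr_minus[of "R+1" "\<alpha>-2"] by simp
    then show ?thesis unfolding lam_def by (simp add: field_simps)
  qed
  then have "sqrt (4*C0/lam) = sqrt (4*C0/cst \<alpha>) * sqrt ((R+1) powr (2-\<alpha>))"
    by (simp only: real_sqrt_mult)
  also have "sqrt ((R+1) powr (2-\<alpha>)) = (R+1) powr e"
    unfolding e_def using powr_half_sqrt_powr[of "R+1" "2-\<alpha>"] R by (simp add: diff_divide_distrib)
  finally have eqs: "sqrt (4*C0/lam) = sqrt (4*C0/cst \<alpha>) * (R+1) powr e" .
  have pe: "(R+1) powr e \<le> 2 * R powr e"
  proof -
    have "(R+1) powr e \<le> (2*R) powr e" by (rule powr_mono2) (use e01 R in auto)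
    also have "\<dots> = 2 powr e * R powr e" by (rule powr_mult)
    also have "\<dots> \<le> 2 * R powr e"
    proof -
      have "2 powr e \<le> 2 powr (1::real)" by (rule powr_mono) (use e01 in auto)
      then show ?thesis by (intro mult_right_mono) auto
    qed
    finally show ?thesis .
  qed
  have "sqrt (4*C0/lam) \<le> sqrt (4*C0/cst \<alpha>) * (2 * R powr e)"
    unfolding eqs by (rule mult_left_mono[OF pe]) (use C0 cp in simp)
  moreover have "1 \<le> R powr e" by (rule ge_one_powr_ge_zero) (use R e01 in auto)
  moreover have "0 \<le> sqrt (4*C0/cst \<alpha>)" using C0 cp by simp
  ultimately have "real (card A) \<le> (4 * sqrt (4*C0/cst \<alpha>) + 2) * R powr e"
    using lin_help2[OF c1] by blast
  then show ?thesis using finA unfolding A_def e_def by simp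
qed



definition ibox :: "real \<Rightarrow> int set" where "ibox R = {k. \<bar>real_of_int k\<bar> \<le> R}"

lemma ibox_fin: "finite (ibox R)"
proof (rule finite_subset)
  show "ibox R \<subseteq> {-\<lfloor>R\<rfloor>..\<lfloor>R\<rfloor>}" unfolding ibox_def by (auto, linarith+)
qed simp

lemma ibox_card: assumes "0 \<le> R" shows "real (card (ibox R)) \<le> 2*R+1"
proof -
  have "card (ibox R) \<le> card {-\<lfloor>R\<rfloor>..\<lfloor>R\<rfloor>}"
    by (rule card_mono) (simp, auto simp: ibox_def, linarith+)
  also have "\<dots> = nat (2*\<lfloor>R\<rfloor>+1)" by simp
  finally have "real (card (ibox R)) \<le> real (nat (2*\<lfloor>R\<rfloor>+1))" by (simp only: of_nat_le_iff)
  also have "\<dots> = 2*real_of_int \<lfloor>R\<rfloor>+1" using assms by simp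
  also have "\<dots> \<le> 2*R+1" by linarith
  finally show ?thesis .
qed

lemma card_Sigma_le:
  assumes "finite A" "\<And>a. a \<in> A \<Longrightarrow> finite (B a)" "\<And>a. a \<in> A \<Longrightarrow> real (card (B a)) \<le> b"
  shows "finite (Sigma A B) \<and> real (card (Sigma A B)) \<le> real (card A) * b"
proof
  show "finite (Sigma A B)" using assms by auto
  have "card (Sigma A B) = (\<Sum>a\<in>A. card (B a))" using assms by simp
  then have "real (card (Sigma A B)) = (\<Sum>a\<in>A. real (card (B a)))" by simp
  also have "\<dots> \<le> real (card A) * b" by (rule sum_bounded_above) (use assms in auto)
  finally show "real (card (Sigma A B)) \<le> real (card A) * b" .
qed

lemma card_image_le_real: "finite A \<Longrightarrow> real (card (f ` A)) \<le> real (card A)"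
  using card_image_le by simp

lemma nz:
  assumes "Tcut \<alpha> C0 N N1 N2 N3 m k k1 k2 k3 \<noteq> 0"
  shows "k = k1 - k2 + k3" "\<bar>k1+k3\<bar> < \<bar>k2\<bar>"
    "\<bar>pw \<alpha> k1 - pw \<alpha> k2 + pw \<alpha> k3 - pw \<alpha> k - m\<bar> \<le> C0"
    "k \<in> ibox N" "k1 \<in> ibox N1" "k2 \<in> ibox N2" "k3 \<in> ibox N3"
  using assms by (auto simp: Tcut_def Tb_def Sset_def indicator_def ibox_def split: if_splits)

lemma T01: "Tcut \<alpha> C0 N N1 N2 N3 m k k1 k2 k3 = 0 \<or> Tcut \<alpha> C0 N N1 N2 N3 m k k1 k2 k3 = 1"
  by (simp add: Tcut_def Tb_def indicator_def)

definition K2set :: "real \<Rightarrow> real \<Rightarrow> real \<Rightarrow> int \<Rightarrow> int \<Rightarrow> int set" where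
  "K2set \<alpha> C0 m k1 k3 = {k2. \<bar>k1+k3\<bar> < \<bar>k2\<bar> \<and> \<bar>pw \<alpha> (k1+k3-k2) + pw \<alpha> k2 - (pw \<alpha> k1 + pw \<alpha> k3 - m)\<bar> \<le> C0}"

lemma K2set_bound:
  assumes "1 < \<alpha>" "0 \<le> C0"
  shows "finite (K2set \<alpha> C0 m k1 k3) \<and> real (card (K2set \<alpha> C0 m k1 k3)) \<le> 8*C0+2"
  unfolding K2set_def by (rule count_k2[OF assms])

lemma nz_K2:
  assumes "Tcut \<alpha> C0 N N1 N2 N3 m k k1 k2 k3 \<noteq> 0"
  shows "k2 \<in> K2set \<alpha> C0 m k1 k3"
proof -
  note h = nz[OF assms]
  have "k1 + k3 - k2 = k" using h(1) by simp
  then show ?thesis unfolding K2set_def using h(2,3) by (auto simp: abs_le_iff)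
qed

lemma supp_fin: "finite {(k,k1,k2,k3). Tcut \<alpha> C0 N N1 N2 N3 m k k1 k2 k3 \<noteq> 0}"
proof (rule finite_subset)
  show "{(k,k1,k2,k3). Tcut \<alpha> C0 N N1 N2 N3 m k k1 k2 k3 \<noteq> 0} \<subseteq> ibox N \<times> ibox N1 \<times> ibox N2 \<times> ibox N3"
    using nz(4-7) by fast
  show "finite (ibox N \<times> ibox N1 \<times> ibox N2 \<times> ibox N3)" by (simp add: ibox_fin)
qed

lemma Sig_card:
  assumes "1 < \<alpha>" "0 \<le> C0" "0 \<le> R"
  shows "finite (SIGMA j:ibox R. K2set \<alpha> C0 m (p j) (q j)) \<and> real (card (SIGMA j:ibox R. K2set \<alpha> C0 m (p j) (q j))) \<le> (2*R+1)*(8*C0+2)"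
proof -
  have h: "finite (SIGMA j:ibox R. K2set \<alpha> C0 m (p j) (q j)) \<and> real (card (SIGMA j:ibox R. K2set \<alpha> C0 m (p j) (q j))) \<le> real (card (ibox R)) * (8*C0+2)"
    by (rule card_Sigma_le) (use ibox_fin K2set_bound[OF assms(1,2)] in auto)
  moreover have "real (card (ibox R)) * (8*C0+2) \<le> (2*R+1)*(8*C0+2)"
    by (rule mult_right_mono) (use ibox_card assms in auto)
  ultimately show ?thesis by linarith
qed

lemma bound1:
  assumes a: "1 < \<alpha>" and C0: "0 \<le> C0" and N: "0 \<le> N1" "0 \<le> N3"
  shows "tnorm2 (\<lambda>(k, k1, k2, k3). Tcut \<alpha> C0 N N1 N2 N3 m k k1 k2 k3) \<le> (2*N1+1)*(2*N3+1)*(8*C0+2)"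
proof -
  define H where "H = (\<lambda>(k, k1, k2, k3). Tcut \<alpha> C0 N N1 N2 N3 m k k1 k2 k3)"
  define P where "P = {x. H x \<noteq> 0}"
  have PE: "P = {(k,k1,k2,k3). Tcut \<alpha> C0 N N1 N2 N3 m k k1 k2 k3 \<noteq> 0}"
    unfolding P_def H_def by auto
  have finP: "finite P" unfolding PE by (rule supp_fin)
  have "tnorm2 H = (\<Sum>x\<in>P. (H x)\<^sup>2)"
    unfolding tnorm2_def by (rule infsum_fin_supp[OF finP]) (simp add: P_def)
  also have "\<dots> = (\<Sum>x\<in>P. 1)"
  proof (rule sum.cong[OF refl])
    fix x assume "x \<in> P"
    then have "H x \<noteq> 0" unfolding P_def by simp
    moreover have "H x = 0 \<or> H x = 1" unfolding H_def by (cases x) (simp add: T01)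
    ultimately show "(H x)\<^sup>2 = 1" by auto
  qed
  also have "\<dots> = real (card P)" by simp
  finally have t: "tnorm2 H = real (card P)" .
  define Sig where "Sig = (SIGMA p:(ibox N1 \<times> ibox N3). K2set \<alpha> C0 m (fst p) (snd p))"
  define f where "f = (\<lambda>((k1::int,k3::int),k2::int). (k1-k2+k3,k1,k2,k3))"
  have sub: "P \<subseteq> f ` Sig"
  proof
    fix x assume "x \<in> P"
    then obtain k k1 k2 k3 where x: "x = (k,k1,k2,k3)" and T: "Tcut \<alpha> C0 N N1 N2 N3 m k k1 k2 k3 \<noteq> 0"
      unfolding PE by auto
    have "((k1,k3),k2) \<in> Sig" unfolding Sig_def using nz[OF T] nz_K2[OF T] by auto
    moreover have "x = f ((k1,k3),k2)" unfolding f_def x using nz(1)[OF T] by simp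
    ultimately show "x \<in> f ` Sig" by blast
  qed
  have finS: "finite (ibox N1 \<times> ibox N3)" by (simp add: ibox_fin)
  have hs: "finite Sig \<and> real (card Sig) \<le> real (card (ibox N1 \<times> ibox N3)) * (8*C0+2)"
    unfolding Sig_def by (rule card_Sigma_le[OF finS]) (use K2set_bound[OF a C0] in auto)
  have "real (card P) \<le> real (card (f ` Sig))"
    using card_mono[OF _ sub] hs by simp
  also have "\<dots> \<le> real (card Sig)" using card_image_le_real hs by blast
  also have "\<dots> \<le> real (card (ibox N1 \<times> ibox N3)) * (8*C0+2)" using hs by simp
  also have "\<dots> = real (card (ibox N1)) * real (card (ibox N3)) * (8*C0+2)"
    by (simp add: card_cartesian_product)
  also have "\<dots> \<le> (2*N1+1)*(2*N3+1)*(8*C0+2)"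
    by (intro mult_right_mono mult_mono ibox_card) (use N C0 in auto)
  finally show ?thesis unfolding H_def[symmetric] t .
qed

lemma bound3:
  assumes a: "1 < \<alpha>" and C0: "0 \<le> C0" and N: "0 \<le> N3"
  shows "opnorm2 (\<lambda>k1 (k, k2, k3). Tcut \<alpha> C0 N N1 N2 N3 m k k1 k2 k3) \<le> (2*N3+1)*(8*C0+2) * 1"
proof (rule schur)
  show "finite {(b, c). (\<lambda>k1 (k, k2, k3). Tcut \<alpha> C0 N N1 N2 N3 m k k1 k2 k3) b c \<noteq> 0}"
  proof (rule finite_subset)
    show "{(b, c). (\<lambda>k1 (k, k2, k3). Tcut \<alpha> C0 N N1 N2 N3 m k k1 k2 k3) b c \<noteq> 0}
      \<subseteq> (\<lambda>(k,k1,k2,k3). (k1,(k,k2,k3))) ` {(k,k1,k2,k3). Tcut \<alpha> C0 N N1 N2 N3 m k k1 k2 k3 \<noteq> 0}"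
      by (force split: prod.splits)
  qed (rule finite_imageI[OF supp_fin])
  show "\<And>b c. (\<lambda>k1 (k, k2, k3). Tcut \<alpha> C0 N N1 N2 N3 m k k1 k2 k3) b c = 0 \<or>
     (\<lambda>k1 (k, k2, k3). Tcut \<alpha> C0 N N1 N2 N3 m k k1 k2 k3) b c = 1"
    by (auto split: prod.splits simp: T01)
next
  fix k1
  define Sig where "Sig = (SIGMA k3:ibox N3. K2set \<alpha> C0 m k1 k3)"
  define g where "g = (\<lambda>(k3::int,k2::int). (k1-k2+k3,k2,k3))"
  have sub: "{c. (\<lambda>k1 (k, k2, k3). Tcut \<alpha> C0 N N1 N2 N3 m k k1 k2 k3) k1 c \<noteq> 0} \<subseteq> g ` Sig"
  proof
    fix c assume "c \<in> {c. (\<lambda>k1 (k, k2, k3). Tcut \<alpha> C0 N N1 N2 N3 m k k1 k2 k3) k1 c \<noteq> 0}"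
    then obtain k k2 k3 where c: "c = (k,k2,k3)" and T: "Tcut \<alpha> C0 N N1 N2 N3 m k k1 k2 k3 \<noteq> 0"
      by (auto split: prod.splits)
    have "(k3,k2) \<in> Sig" unfolding Sig_def using nz[OF T] nz_K2[OF T] by auto
    moreover have "c = g (k3,k2)" unfolding g_def c using nz(1)[OF T] by simp
    ultimately show "c \<in> g ` Sig" by blast
  qed
  have hs: "finite Sig \<and> real (card Sig) \<le> (2*N3+1)*(8*C0+2)"
    unfolding Sig_def using Sig_card[OF a C0 N, of m "\<lambda>_. k1" "\<lambda>j. j"] by simp
  have "real (card {c. (\<lambda>k1 (k, k2, k3). Tcut \<alpha> C0 N N1 N2 N3 m k k1 k2 k3) k1 c \<noteq> 0}) \<le> real (card (g ` Sig))"
    using card_mono[OF _ sub] hs by simp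
  also have "\<dots> \<le> real (card Sig)" using card_image_le_real hs by blast
  finally show "real (card {c. (\<lambda>k1 (k, k2, k3). Tcut \<alpha> C0 N N1 N2 N3 m k k1 k2 k3) k1 c \<noteq> 0}) \<le> (2*N3+1)*(8*C0+2)"
    using hs by linarith
next
  fix c :: "int \<times> int \<times> int"
  obtain k k2 k3 where c: "c = (k,k2,k3)" by (cases c) auto
  have "{b. (\<lambda>k1 (k, k2, k3). Tcut \<alpha> C0 N N1 N2 N3 m k k1 k2 k3) b c \<noteq> 0} \<subseteq> {k+k2-k3}"
    unfolding c using nz(1) by fastforce
  then have "card {b. (\<lambda>k1 (k, k2, k3). Tcut \<alpha> C0 N N1 N2 N3 m k k1 k2 k3) b c \<noteq> 0} \<le> card {k+k2-k3}"
    by (rule card_mono[rotated]) simp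
  then show "real (card {b. (\<lambda>k1 (k, k2, k3). Tcut \<alpha> C0 N N1 N2 N3 m k k1 k2 k3) b c \<noteq> 0}) \<le> 1" by simp
qed

lemma bound4:
  assumes a: "1 < \<alpha>" and C0: "0 \<le> C0" and N: "0 \<le> N1"
  shows "opnorm2 (\<lambda>k3 (k, k1, k2). Tcut \<alpha> C0 N N1 N2 N3 m k k1 k2 k3) \<le> (2*N1+1)*(8*C0+2) * 1"
proof (rule schur)
  show "finite {(b, c). (\<lambda>k3 (k, k1, k2). Tcut \<alpha> C0 N N1 N2 N3 m k k1 k2 k3) b c \<noteq> 0}"
  proof (rule finite_subset)
    show "{(b, c). (\<lambda>k3 (k, k1, k2). Tcut \<alpha> C0 N N1 N2 N3 m k k1 k2 k3) b c \<noteq> 0}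
      \<subseteq> (\<lambda>(k,k1,k2,k3). (k3,(k,k1,k2))) ` {(k,k1,k2,k3). Tcut \<alpha> C0 N N1 N2 N3 m k k1 k2 k3 \<noteq> 0}"
      by (force split: prod.splits)
  qed (rule finite_imageI[OF supp_fin])
  show "\<And>b c. (\<lambda>k3 (k, k1, k2). Tcut \<alpha> C0 N N1 N2 N3 m k k1 k2 k3) b c = 0 \<or>
     (\<lambda>k3 (k, k1, k2). Tcut \<alpha> C0 N N1 N2 N3 m k k1 k2 k3) b c = 1"
    by (auto split: prod.splits simp: T01)
next
  fix k3
  define Sig where "Sig = (SIGMA k1:ibox N1. K2set \<alpha> C0 m k1 k3)"
  define g where "g = (\<lambda>(k1::int,k2::int). (k1-k2+k3,k1,k2))"
  have sub: "{c. (\<lambda>k3 (k, k1, k2). Tcut \<alpha> C0 N N1 N2 N3 m k k1 k2 k3) k3 c \<noteq> 0} \<subseteq> g ` Sig"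
  proof
    fix c assume "c \<in> {c. (\<lambda>k3 (k, k1, k2). Tcut \<alpha> C0 N N1 N2 N3 m k k1 k2 k3) k3 c \<noteq> 0}"
    then obtain k k1 k2 where c: "c = (k,k1,k2)" and T: "Tcut \<alpha> C0 N N1 N2 N3 m k k1 k2 k3 \<noteq> 0"
      by (auto split: prod.splits)
    have "(k1,k2) \<in> Sig" unfolding Sig_def using nz[OF T] nz_K2[OF T] by auto
    moreover have "c = g (k1,k2)" unfolding g_def c using nz(1)[OF T] by simp
    ultimately show "c \<in> g ` Sig" by blast
  qed
  have hs: "finite Sig \<and> real (card Sig) \<le> (2*N1+1)*(8*C0+2)"
    unfolding Sig_def using Sig_card[OF a C0 N, of m "\<lambda>j. j" "\<lambda>_. k3"] by simp
  have "real (card {c. (\<lambda>k3 (k, k1, k2). Tcut \<alpha> C0 N N1 N2 N3 m k k1 k2 k3) k3 c \<noteq> 0}) \<le> real (card (g ` Sig))"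
    using card_mono[OF _ sub] hs by simp
  also have "\<dots> \<le> real (card Sig)" using card_image_le_real hs by blast
  finally show "real (card {c. (\<lambda>k3 (k, k1, k2). Tcut \<alpha> C0 N N1 N2 N3 m k k1 k2 k3) k3 c \<noteq> 0}) \<le> (2*N1+1)*(8*C0+2)"
    using hs by linarith
next
  fix c :: "int \<times> int \<times> int"
  obtain k k1 k2 where c: "c = (k,k1,k2)" by (cases c) auto
  have "{b. (\<lambda>k3 (k, k1, k2). Tcut \<alpha> C0 N N1 N2 N3 m k k1 k2 k3) b c \<noteq> 0} \<subseteq> {k-k1+k2}"
    unfolding c using nz(1) by fastforce
  then have "card {b. (\<lambda>k3 (k, k1, k2). Tcut \<alpha> C0 N N1 N2 N3 m k k1 k2 k3) b c \<noteq> 0} \<le> card {k-k1+k2}"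
    by (rule card_mono[rotated]) simp
  then show "real (card {b. (\<lambda>k3 (k, k1, k2). Tcut \<alpha> C0 N N1 N2 N3 m k k1 k2 k3) b c \<noteq> 0}) \<le> 1" by simp
qed

definition RowA :: "real \<Rightarrow> real \<Rightarrow> real \<Rightarrow> int \<Rightarrow> real \<Rightarrow> int set" where
  "RowA \<alpha> C0 R s a = {j. \<bar>real_of_int j\<bar> \<le> R \<and> \<bar>pw \<alpha> j + pw \<alpha> (s-j) - a\<bar> \<le> C0}"

lemma bound2:
  assumes a: "1 < \<alpha>" "\<alpha> < 2" and C0: "0 \<le> C0" and N: "1 \<le> N1" "1 \<le> N3"
  shows "opnorm2 (\<lambda>(k, k2) (k1, k3). Tcut \<alpha> C0 N N1 N2 N3 m k k1 k2 k3)
     \<le> ((4 * sqrt (4*C0/cst \<alpha>) + 2) * min N1 N3 powr (1 - \<alpha>/2)) * (8*C0+2)"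
proof (rule schur)
  show "finite {(b, c). (\<lambda>(k, k2) (k1, k3). Tcut \<alpha> C0 N N1 N2 N3 m k k1 k2 k3) b c \<noteq> 0}"
  proof (rule finite_subset)
    show "{(b, c). (\<lambda>(k, k2) (k1, k3). Tcut \<alpha> C0 N N1 N2 N3 m k k1 k2 k3) b c \<noteq> 0}
      \<subseteq> (\<lambda>(k,k1,k2,k3). ((k,k2),(k1,k3))) ` {(k,k1,k2,k3). Tcut \<alpha> C0 N N1 N2 N3 m k k1 k2 k3 \<noteq> 0}"
      by (force split: prod.splits)
  qed (rule finite_imageI[OF supp_fin])
  show "\<And>b c. (\<lambda>(k, k2) (k1, k3). Tcut \<alpha> C0 N N1 N2 N3 m k k1 k2 k3) b c = 0 \<or>
     (\<lambda>(k, k2) (k1, k3). Tcut \<alpha> C0 N N1 N2 N3 m k k1 k2 k3) b c = 1"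
    by (auto split: prod.splits simp: T01)
next
  fix b :: "int \<times> int"
  obtain k k2 where b: "b = (k,k2)" by (cases b) auto
  define s where "s = k + k2"
  define aa where "aa = pw \<alpha> k2 + pw \<alpha> k + m"
  define X where "X = {c. (\<lambda>(k, k2) (k1, k3). Tcut \<alpha> C0 N N1 N2 N3 m k k1 k2 k3) b c \<noteq> 0}"
  define K2 where "K2 = 4 * sqrt (4*C0/cst \<alpha>) + 2"
  have mem: "\<bar>pw \<alpha> k1 + pw \<alpha> k3 - aa\<bar> \<le> C0 \<and> k3 = s - k1 \<and> k1 \<in> ibox N1 \<and> k3 \<in> ibox N3"
    if "(k1,k3) \<in> X" for k1 k3
  proof -
    have T: "Tcut \<alpha> C0 N N1 N2 N3 m k k1 k2 k3 \<noteq> 0" using that unfolding X_def b by simp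
    note h = nz[OF T]
    have e: "pw \<alpha> k1 + pw \<alpha> k3 - aa = pw \<alpha> k1 - pw \<alpha> k2 + pw \<alpha> k3 - pw \<alpha> k - m"
      unfolding aa_def by simp
    have p: "\<bar>pw \<alpha> k1 + pw \<alpha> k3 - aa\<bar> \<le> C0" unfolding e by (rule h(3))
    then show ?thesis using h(1,5,7) unfolding s_def by auto
  qed
  have sub1: "X \<subseteq> (\<lambda>j. (j, s-j)) ` RowA \<alpha> C0 N1 s aa"
  proof
    fix c assume c: "c \<in> X"
    obtain k1 k3 where c': "c = (k1,k3)" by (cases c) auto
    note h = mem[OF c[unfolded c']]
    have "k1 \<in> RowA \<alpha> C0 N1 s aa" unfolding RowA_def using h by (auto simp: ibox_def)
    then show "c \<in> (\<lambda>j. (j, s-j)) ` RowA \<alpha> C0 N1 s aa" unfolding c' using h by auto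
  qed
  have sub3: "X \<subseteq> (\<lambda>j. (s-j, j)) ` RowA \<alpha> C0 N3 s aa"
  proof
    fix c assume c: "c \<in> X"
    obtain k1 k3 where c': "c = (k1,k3)" by (cases c) auto
    note h = mem[OF c[unfolded c']]
    have "k1 = s - k3" using h by simp
    then have "k3 \<in> RowA \<alpha> C0 N3 s aa" unfolding RowA_def using h by (auto simp: ibox_def add.commute)
    then show "c \<in> (\<lambda>j. (s-j, j)) ` RowA \<alpha> C0 N3 s aa" unfolding c'
      by (rule rev_image_eqI) (use \<open>k1 = s - k3\<close> in simp)
  qed
  have r1: "finite (RowA \<alpha> C0 N1 s aa) \<and> real (card (RowA \<alpha> C0 N1 s aa)) \<le> K2 * N1 powr (1 - \<alpha>/2)"
    unfolding RowA_def K2_def by (rule count_row[OF a C0 N(1)])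
  have r3: "finite (RowA \<alpha> C0 N3 s aa) \<and> real (card (RowA \<alpha> C0 N3 s aa)) \<le> K2 * N3 powr (1 - \<alpha>/2)"
    unfolding RowA_def K2_def by (rule count_row[OF a C0 N(2)])
  have c1: "real (card X) \<le> K2 * N1 powr (1 - \<alpha>/2)"
  proof -
    have "real (card X) \<le> real (card ((\<lambda>j. (j, s-j)) ` RowA \<alpha> C0 N1 s aa))"
      using card_mono[OF _ sub1] r1 by simp
    also have "\<dots> \<le> real (card (RowA \<alpha> C0 N1 s aa))" using card_image_le_real r1 by blast
    finally show ?thesis using r1 by linarith
  qed
  have c3: "real (card X) \<le> K2 * N3 powr (1 - \<alpha>/2)"
  proof -
    have "real (card X) \<le> real (card ((\<lambda>j. (s-j, j)) ` RowA \<alpha> C0 N3 s aa))"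
      using card_mono[OF _ sub3] r3 by simp
    also have "\<dots> \<le> real (card (RowA \<alpha> C0 N3 s aa))" using card_image_le_real r3 by blast
    finally show ?thesis using r3 by linarith
  qed
  have "real (card X) \<le> K2 * min N1 N3 powr (1 - \<alpha>/2)"
    using c1 c3 by (cases "N1 \<le> N3") (simp_all add: min_def)
  then show "real (card {c. (\<lambda>(k, k2) (k1, k3). Tcut \<alpha> C0 N N1 N2 N3 m k k1 k2 k3) b c \<noteq> 0})
     \<le> (4 * sqrt (4*C0/cst \<alpha>) + 2) * min N1 N3 powr (1 - \<alpha>/2)"
    unfolding X_def K2_def .
next
  fix c :: "int \<times> int"
  obtain k1 k3 where c: "c = (k1,k3)" by (cases c) auto
  define Y where "Y = {b. (\<lambda>(k, k2) (k1, k3). Tcut \<alpha> C0 N N1 N2 N3 m k k1 k2 k3) b c \<noteq> 0}"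
  have sub: "Y \<subseteq> (\<lambda>k2. (k1+k3-k2, k2)) ` K2set \<alpha> C0 m k1 k3"
  proof
    fix b assume bY: "b \<in> Y"
    obtain k k2 where b: "b = (k,k2)" by (cases b) auto
    have T: "Tcut \<alpha> C0 N N1 N2 N3 m k k1 k2 k3 \<noteq> 0" using bY unfolding Y_def b c by simp
    show "b \<in> (\<lambda>k2. (k1+k3-k2, k2)) ` K2set \<alpha> C0 m k1 k3"
      unfolding b using nz_K2[OF T] nz(1)[OF T] by force
  qed
  have hk: "finite (K2set \<alpha> C0 m k1 k3) \<and> real (card (K2set \<alpha> C0 m k1 k3)) \<le> 8*C0+2"
    by (rule K2set_bound[OF a(1) C0])
  have "real (card Y) \<le> real (card ((\<lambda>k2. (k1+k3-k2, k2)) ` K2set \<alpha> C0 m k1 k3))"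
    using card_mono[OF _ sub] hk by simp
  also have "\<dots> \<le> real (card (K2set \<alpha> C0 m k1 k3))" using card_image_le_real hk by blast
  finally show "real (card {b. (\<lambda>(k, k2) (k1, k3). Tcut \<alpha> C0 N N1 N2 N3 m k k1 k2 k3) b c \<noteq> 0}) \<le> 8*C0+2"
    unfolding Y_def[symmetric] using hk by linarith
qed

theorem lemma2p15:
  fixes \<alpha> C0 :: real
  assumes "1 < \<alpha>" "\<alpha> < 2" "0 < C0"
  shows "\<exists>C>0. \<forall>N N1 N2 N3 m :: real.
    dyadic N \<and> dyadic N1 \<and> dyadic N2 \<and> dyadic N3 \<and>
    1 \<le> N1 \<and> N1 \<le> N \<and> 1 \<le> N2 \<and> N2 \<le> N \<and> 1 \<le> N3 \<and> N3 \<le> N \<longrightarrow>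
      tnorm2 (\<lambda>(k, k1, k2, k3). Tcut \<alpha> C0 N N1 N2 N3 m k k1 k2 k3) \<le> C * N1 * N3 \<and>
      opnorm2 (\<lambda>(k, k2) (k1, k3). Tcut \<alpha> C0 N N1 N2 N3 m k k1 k2 k3)
        \<le> C * min N1 N3 powr (1 - \<alpha> / 2) \<and>
      opnorm2 (\<lambda>k1 (k, k2, k3). Tcut \<alpha> C0 N N1 N2 N3 m k k1 k2 k3) \<le> C * N3 \<and>
      opnorm2 (\<lambda>k3 (k, k1, k2). Tcut \<alpha> C0 N N1 N2 N3 m k k1 k2 k3) \<le> C * N1"
proof -
  define B where "B = 8*C0+2"
  define K2 where "K2 = 4 * sqrt (4*C0/cst \<alpha>) + 2"
  define C where "C = 9 * B * (1 + K2)"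
  have B0: "0 < B" unfolding B_def using assms by simp
  have "0 < cst \<alpha>" by (rule cst_pos) (use assms in auto)
  then have "0 \<le> sqrt (4*C0/cst \<alpha>)" using assms by simp
  then have K20: "0 < K2" unfolding K2_def by linarith
  have C0': "0 \<le> C0" using assms by simp
  have CB: "9 * B \<le> C" unfolding C_def using B0 K20 by (simp add: algebra_simps)
  have CK: "K2 * B \<le> C" unfolding C_def using B0 K20 by (simp add: algebra_simps)
  have Cpos: "0 < C" unfolding C_def using B0 K20 by simp
  show ?thesis
  proof (intro exI[of _ C] conjI allI impI Cpos)
    fix N N1 N2 N3 m :: real
    assume h: "dyadic N \<and> dyadic N1 \<and> dyadic N2 \<and> dyadic N3 \<and>
      1 \<le> N1 \<and> N1 \<le> N \<and> 1 \<le> N2 \<and> N2 \<le> N \<and> 1 \<le> N3 \<and> N3 \<le> N"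
    then have N1: "1 \<le> N1" and N3: "1 \<le> N3" by auto
    have a1: "2*N1+1 \<le> 3*N1" "2*N3+1 \<le> 3*N3" using N1 N3 by auto
    have "tnorm2 (\<lambda>(k, k1, k2, k3). Tcut \<alpha> C0 N N1 N2 N3 m k k1 k2 k3) \<le> (2*N1+1)*(2*N3+1)*B"
      unfolding B_def by (rule bound1) (use assms N1 N3 in auto)
    also have "\<dots> \<le> (3*N1)*(3*N3)*B"
      by (intro mult_right_mono mult_mono a1) (use N1 N3 B0 in auto)
    also have "\<dots> = (9*B) * (N1 * N3)" by (simp add: algebra_simps)
    also have "\<dots> \<le> C * (N1 * N3)" by (rule mult_right_mono[OF CB]) (use N1 N3 in simp)
    finally show "tnorm2 (\<lambda>(k, k1, k2, k3). Tcut \<alpha> C0 N N1 N2 N3 m k k1 k2 k3) \<le> C * N1 * N3"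
      by (simp add: mult.assoc)
    have "opnorm2 (\<lambda>(k, k2) (k1, k3). Tcut \<alpha> C0 N N1 N2 N3 m k k1 k2 k3)
        \<le> (K2 * min N1 N3 powr (1 - \<alpha>/2)) * B"
      unfolding K2_def B_def by (rule bound2) (use assms N1 N3 in auto)
    also have "\<dots> = (K2 * B) * min N1 N3 powr (1 - \<alpha>/2)" by (simp add: algebra_simps)
    also have "\<dots> \<le> C * min N1 N3 powr (1 - \<alpha>/2)" by (rule mult_right_mono[OF CK]) simp
    finally show "opnorm2 (\<lambda>(k, k2) (k1, k3). Tcut \<alpha> C0 N N1 N2 N3 m k k1 k2 k3)
        \<le> C * min N1 N3 powr (1 - \<alpha> / 2)" .
    have "opnorm2 (\<lambda>k1 (k, k2, k3). Tcut \<alpha> C0 N N1 N2 N3 m k k1 k2 k3) \<le> (2*N3+1)*B*1"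
      unfolding B_def by (rule bound3) (use assms N3 in auto)
    also have "\<dots> \<le> (3*N3)*B" using a1 B0 by (simp add: mult_right_mono)
    also have "\<dots> = (9*B) * (N3/3)" by simp
    also have "\<dots> \<le> C * (N3/3)" by (rule mult_right_mono[OF CB]) (use N3 in simp)
    also have "\<dots> \<le> C * N3" by (rule mult_left_mono) (use N3 Cpos in auto)
    finally show "opnorm2 (\<lambda>k1 (k, k2, k3). Tcut \<alpha> C0 N N1 N2 N3 m k k1 k2 k3) \<le> C * N3" .
    have "opnorm2 (\<lambda>k3 (k, k1, k2). Tcut \<alpha> C0 N N1 N2 N3 m k k1 k2 k3) \<le> (2*N1+1)*B*1"
      unfolding B_def by (rule bound4) (use assms N1 in auto)
    also have "\<dots> \<le> (3*N1)*B" using a1 B0 by (simp add: mult_right_mono)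
    also have "\<dots> = (9*B) * (N1/3)" by simp
    also have "\<dots> \<le> C * (N1/3)" by (rule mult_right_mono[OF CB]) (use N1 in simp)
    also have "\<dots> \<le> C * N1" by (rule mult_left_mono) (use N1 Cpos in auto)
    finally show "opnorm2 (\<lambda>k3 (k, k1, k2). Tcut \<alpha> C0 N N1 N2 N3 m k k1 k2 k3) \<le> C * N1" .
  qed
qed

end
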